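(* Let $q\in\mathbb{C}^*$, $\lambda\in\mathbb{C}^*$, $a,b\in\mathbb{C}$, and let $\lambda^{\frac12}$ denote a square root of $\lambda$. Then $\Omega_{\mathcal{L}}(\lambda,a,b)\cong\Omega_{\mathcal{R}}(\lambda^{\frac12},a,2b)$ as $\mathcal{L}$-modules, where $\Omega_{\mathcal{R}}(\lambda^{\frac12},a,2b)$ is regarded as an $\mathcal{L}$-module via $\tau$.
   Context: Let $\mathbb{Z}_+=\{0,1,2,\dots\}$. For $s\in\{0,\frac12\}$ let $S(q)$ be the Lie superalgebra over $\mathbb{C}$ with even basis $\{L_{m,i}\mid m\in\mathbb{Z},i\in\mathbb{Z}_+\}$, odd basis $\{G_{l,j}\mid l\in s+\mathbb{Z},j\in\mathbb{Z}_+\}$ and brackets $[L_{m,i},L_{n,j}]=(n(i+q)-m(j+q))L_{m+n,i+j}$, $[L_{m,i},G_{l,j}]=(l(i+q)-m(j+\frac{q}{2}))G_{m+l,i+j}$, $[G_{l,i},G_{r,j}]=2qL_{l+r,i+j}$. For $s=0$ this is $\mathcal{R}$ (Ramond-Block), for $s=\frac12$ it is $\mathcal{L}$ (Neveu-Schwarz-Block), with the same $q$. $\tau:\mathcal{L}\to\mathcal{R}$ is the injective Lie superalgebra homomorphism with $\tau(L_{m,i})=\frac12L_{2m,i}$, $\tau(G_{r,j})=\frac{1}{\sqrt2}G_{2r,j}$. Modules are supermodules; $\delta$ is the Kronecker delta. For $\nu\in\mathbb{C}^*$, $a,c\in\mathbb{C}$, $\Omega_{\mathcal{R}}(\nu,a,c)=\mathbb{C}[t^2]\oplus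 t\mathbb{C}[t^2]$ (even part $\mathbb{C}[t^2]$, odd part $t\mathbb{C}[t^2]$) is the $\mathcal{R}$-module with, for $f\in\mathbb{C}[t^2]$, $m\in\mathbb{Z}$, $i\in\mathbb{Z}_+$: $L_{m,i}f(t^2)=\nu^m(\delta_{i,0}(t^2-mqa)+\delta_{q,-1}\delta_{i,1}c)f(t^2-mq)$; $L_{m,i}tf(t^2)=\nu^m t(\delta_{i,0}(t^2-mqa-\frac{mq}{2})+\delta_{q,-1}\delta_{i,1}c)f(t^2-mq)$; $G_{m,i}f(t^2)=\nu^m\delta_{i,0}tf(t^2-mq)$; $G_{m,i}tf(t^2)=q\nu^m(\delta_{i,0}(t^2-2mqa)+2\delta_{q,-1}\delta_{i,1}c)f(t^2-mq)$. For $\lambda\in\mathbb{C}^*$, $a,b\in\mathbb{C}$, $\Omega_{\mathcal{L}}(\lambda,a,b)=\mathbb{C}[t]\oplus\mathbb{C}[x]$ (even part $\mathbb{C}[t]$, odd part $\mathbb{C}[x]$) is the $\mathcal{L}$-module with, for $f\in\mathbb{C}[t]$, $g\in\mathbb{C}[x]$, $m\in\mathbb{Z}$, $r\in\frac12+\mathbb{Z}$, $i\in\mathbb{Z}_+$: $L_{m,i}f(t)=\lambda^m(\delta_{i,0}(t-mqa)+\delta_{q,-1}\delta_{i,1}b)f(t-mq)$; $L_{m,i}g(x)=\lambda^m(\delta_{i,0}(x-mqa-\frac{mq}{2})+\delta_{q,-1}\delta_{i,1}b)g(x-mq)$; $G_{r,i}f(t)=\lambda^{r-\frac12}\delta_{i,0}f(x-rq)$;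 $G_{r,i}g(x)=q\lambda^{r+\frac12}(\delta_{i,0}(t-2rqa)+2\delta_{q,-1}\delta_{i,1}b)g(t-rq)$. *)

theory Defs
  imports Complex_Main "HOL-Computational_Algebra.Polynomial"
begin

definition shift :: "complex poly \<Rightarrow> complex \<Rightarrow> complex poly" where
  "shift p s = pcompose p [:- s, 1:]"

(* Elements of a module are pairs (even part, odd part) of polynomials.
   Omega_R(nu,a,c): a pair (f,g) encodes f(t^2) + t g(t^2), so both components
   are polynomials in the variable T = t^2.
   Omega_L(lam,a,b): a pair (f,g) encodes f(t) + g(x). *)

definition psmult :: "complex \<Rightarrow> complex poly \<times> complex poly \<Rightarrow> complex poly \<times> complex poly" where
  "psmult c v = (smult c (fst v), smult c (snd v))"

definition OmR_L :: "complex \<Rightarrow> complex \<Rightarrow> complex \<Rightarrow> complex \<Rightarrow> int \<Rightarrow> nat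
     \<Rightarrow> complex poly \<times> complex poly \<Rightarrow> complex poly \<times> complex poly" where
  "OmR_L q nu a c m i v =
     (let mm = of_int m; d0 = of_bool (i = 0); d1 = of_bool (q = -1 \<and> i = 1) in
      (smult (nu powi m) ([: d0 * (- (mm*q*a)) + d1 * c, d0 :] * shift (fst v) (mm*q)),
       smult (nu powi m) ([: d0 * (- (mm*q*a) - mm*q/2) + d1 * c, d0 :] * shift (snd v) (mm*q))))"

(* Action of G_{m,i} on Omega_R(nu,a,c) (m integer since s = 0) *)
definition OmR_G :: "complex \<Rightarrow> complex \<Rightarrow> complex \<Rightarrow> complex \<Rightarrow> int \<Rightarrow> nat
     \<Rightarrow> complex poly \<times> complex poly \<Rightarrow> complex poly \<times> complex poly" where
  "OmR_G q nu a c m i v =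
     (let mm = of_int m; d0 = of_bool (i = 0); d1 = of_bool (q = -1 \<and> i = 1) in
      (smult (q * nu powi m) ([: d0 * (- (2*mm*q*a)) + 2 * d1 * c, d0 :] * shift (snd v) (mm*q)),
       smult (nu powi m * d0) (shift (fst v) (mm*q))))"

definition OmL_L :: "complex \<Rightarrow> complex \<Rightarrow> complex \<Rightarrow> complex \<Rightarrow> int \<Rightarrow> nat
     \<Rightarrow> complex poly \<times> complex poly \<Rightarrow> complex poly \<times> complex poly" where
  "OmL_L q lam a b m i v =
     (let mm = of_int m; d0 = of_bool (i = 0); d1 = of_bool (q = -1 \<and> i = 1) in
      (smult (lam powi m) ([: d0 * (- (mm*q*a)) + d1 * b, d0 :] * shift (fst v) (mm*q)),
       smult (lam powi m) ([: d0 * (- (mm*q*a) - mm*q/2) + d1 * b, d0 :] * shift (snd v) (mm*q))))"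

(* Action of G_{r,i} on Omega_L(lam,a,b), where the half-integer r is written r = k + 1/2,
   k :: int; so lam^(r-1/2) = lam^k and lam^(r+1/2) = lam^(k+1). *)
definition OmL_G :: "complex \<Rightarrow> complex \<Rightarrow> complex \<Rightarrow> complex \<Rightarrow> int \<Rightarrow> nat
     \<Rightarrow> complex poly \<times> complex poly \<Rightarrow> complex poly \<times> complex poly" where
  "OmL_G q lam a b k i v =
     (let r = of_int k + 1/2; d0 = of_bool (i = 0); d1 = of_bool (q = -1 \<and> i = 1) in
      (smult (q * lam powi (k + 1)) ([: d0 * (- (2*r*q*a)) + 2 * d1 * b, d0 :] * shift (snd v) (r*q)),
       smult (lam powi k * d0) (shift (fst v) (r*q))))"

definition tauR_L :: "complex \<Rightarrow> complex \<Rightarrow> complex \<Rightarrow> complex \<Rightarrow> int \<Rightarrow> nat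
     \<Rightarrow> complex poly \<times> complex poly \<Rightarrow> complex poly \<times> complex poly" where
  "tauR_L q nu a c m i v = psmult (1/2) (OmR_L q nu a c (2*m) i v)"

definition tauR_G :: "complex \<Rightarrow> complex \<Rightarrow> complex \<Rightarrow> complex \<Rightarrow> int \<Rightarrow> nat
     \<Rightarrow> complex poly \<times> complex poly \<Rightarrow> complex poly \<times> complex poly" where
  "tauR_G q nu a c k i v = psmult (1 / complex_of_real (sqrt 2)) (OmR_G q nu a c (2*k+1) i v)"

definition lin_bij :: "(complex poly \<Rightarrow> complex poly) \<Rightarrow> bool" where
  "lin_bij h \<longleftrightarrow> (\<forall>f g. h (f + g) = h f + h g) \<and> (\<forall>c f. h (smult c f) = smult c (h f)) \<and> bij h"

definition L_module_iso :: "complex \<Rightarrow> complex \<Rightarrow> complex \<Rightarrow> complex \<Rightarrow> complex \<Rightarrow> complex \<Rightarrow>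
     (complex poly \<Rightarrow> complex poly) \<Rightarrow> (complex poly \<Rightarrow> complex poly) \<Rightarrow> bool" where
  "L_module_iso q lam a b nu c h0 h1 \<longleftrightarrow>
     lin_bij h0 \<and> lin_bij h1 \<and>
     (\<forall>m i v. map_prod h0 h1 (OmL_L q lam a b m i v) = tauR_L q nu a c m i (map_prod h0 h1 v)) \<and>
     (\<forall>k i v. map_prod h0 h1 (OmL_G q lam a b k i v) = tauR_G q nu a c k i (map_prod h0 h1 v))"

end

theory Submission
  imports Defs
begin

lemma pe: "(p::complex poly) = q \<longleftrightarrow> (\<forall>x. poly p x = poly q x)"
  by (simp add: poly_eq_poly_eq_iff[symmetric] fun_eq_iff)

definition sc :: "complex poly \<Rightarrow> complex poly" where
  "sc f = pcompose f [:0, 1/2:]"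

lemma poly_sc[simp]: "poly (sc f) x = poly f (x/2)"
  by (simp add: sc_def poly_pcompose)

lemma poly_shift[simp]: "poly (shift f s) x = poly f (x - s)"
  by (simp add: shift_def poly_pcompose)

lemma lin_bij_sc:
  assumes "c \<noteq> 0"
  shows "lin_bij (\<lambda>f. smult c (sc f))"
proof -
  let ?h = "\<lambda>f. smult c (sc f)"
  let ?g = "\<lambda>f. smult (1/c) (pcompose f [:0, 2:])"
  have 1: "?g (?h f) = f" for f
    using assms by (simp add: pe poly_pcompose)
  have 2: "?h (?g f) = f" for f
    using assms by (simp add: pe poly_pcompose)
  have "bij ?h" by (rule o_bij[of ?g]) (simp_all only: comp_def 1 2 id_def)
  then show ?thesis unfolding lin_bij_def
    by (simp add: sc_def pcompose_add pcompose_smult smult_add_right mult.commute)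
qed

lemma mu_pow:
  assumes "mu ^ 2 = (lam::complex)" "mu \<noteq> 0"
  shows "mu powi (2*m) = lam powi m" "mu powi (2*k+1) = mu * lam powi k"
    "lam powi (k+1) = lam * lam powi k"
proof -
  have "lam \<noteq> 0" using assms by auto
  show a: "mu powi (2*m) = lam powi m"
    using assms by (simp add: power_int_mult)
  show "mu powi (2*k+1) = mu * lam powi k"
    using assms by (simp add: power_int_add power_int_mult)
  show "lam powi (k+1) = lam * lam powi k"
    using \<open>lam \<noteq> 0\<close> by (simp add: power_int_add)
qed


lemma Lfst:
  fixes q lam a b mu s :: complex and m :: int
  assumes "mu ^ 2 = lam" "mu \<noteq> 0"
  shows "smult s (sc (smult (lam powi m) ([: d0 * (- (of_int m*q*a)) + d1 * b, d0 :] * shift f (of_int m*q))))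
   = smult (1/2) (smult (mu powi (2*m)) ([: d0 * (- (of_int (2*m)*q*a)) + d1 * (2*b), d0 :] * shift (smult s (sc f)) (of_int (2*m)*q)))"
  unfolding pe
proof
  fix x
  have e: "(x - of_int (2*m)*q)/2 = x/2 - of_int m * q" by (simp add: field_simps)
  show "poly (smult s (sc (smult (lam powi m) ([: d0 * (- (of_int m*q*a)) + d1 * b, d0 :] * shift f (of_int m*q))))) x
   = poly (smult (1/2) (smult (mu powi (2*m)) ([: d0 * (- (of_int (2*m)*q*a)) + d1 * (2*b), d0 :] * shift (smult s (sc f)) (of_int (2*m)*q)))) x"
    apply (simp only: poly_smult poly_sc poly_mult poly_shift e mu_pow[OF assms])
    apply (simp add: algebra_simps)
    done
qed

lemma Lsnd:
  fixes q lam a b mu s :: complex and m :: int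
  assumes "mu ^ 2 = lam" "mu \<noteq> 0"
  shows "smult s (sc (smult (lam powi m) ([: d0 * (- (of_int m*q*a) - of_int m*q/2) + d1 * b, d0 :] * shift f (of_int m*q))))
   = smult (1/2) (smult (mu powi (2*m)) ([: d0 * (- (of_int (2*m)*q*a) - of_int (2*m)*q/2) + d1 * (2*b), d0 :] * shift (smult s (sc f)) (of_int (2*m)*q)))"
  unfolding pe
proof
  fix x
  have e: "(x - of_int (2*m)*q)/2 = x/2 - of_int m * q" by (simp add: field_simps)
  show "poly (smult s (sc (smult (lam powi m) ([: d0 * (- (of_int m*q*a) - of_int m*q/2) + d1 * b, d0 :] * shift f (of_int m*q))))) x
   = poly (smult (1/2) (smult (mu powi (2*m)) ([: d0 * (- (of_int (2*m)*q*a) - of_int (2*m)*q/2) + d1 * (2*b), d0 :] * shift (smult s (sc f)) (of_int (2*m)*q)))) x"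
    apply (simp only: poly_smult poly_sc poly_mult poly_shift e mu_pow[OF assms])
    apply (simp add: algebra_simps)
    done
qed

lemma Gfst:
  fixes q lam a b mu s :: complex and k :: int
  assumes "mu ^ 2 = lam" "mu \<noteq> 0" "s * s = 2"
  shows "smult s (sc (smult (q * lam powi (k + 1)) ([: d0 * (- (2*(of_int k + 1/2)*q*a)) + 2 * d1 * b, d0 :] * shift g ((of_int k + 1/2)*q))))
   = smult (1/s) (smult (q * mu powi (2*k+1)) ([: d0 * (- (2*of_int (2*k+1)*q*a)) + 2 * d1 * (2*b), d0 :] * shift (smult mu (sc g)) (of_int (2*k+1)*q)))"
  unfolding pe
proof
  fix x
  have s0: "s \<noteq> 0" using assms by auto
  have e: "(x - of_int (2*k+1)*q)/2 = x/2 - (of_int k + 1/2) * q" by (simp add: field_simps)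
  have l: "lam = mu * mu" using assms(1) by (simp add: power2_eq_square)
  have si: "1 / s = s / 2" using s0 assms(3) by (simp add: field_simps)
  show "poly (smult s (sc (smult (q * lam powi (k + 1)) ([: d0 * (- (2*(of_int k + 1/2)*q*a)) + 2 * d1 * b, d0 :] * shift g ((of_int k + 1/2)*q))))) x
   = poly (smult (1/s) (smult (q * mu powi (2*k+1)) ([: d0 * (- (2*of_int (2*k+1)*q*a)) + 2 * d1 * (2*b), d0 :] * shift (smult mu (sc g)) (of_int (2*k+1)*q)))) x"
    apply (simp only: poly_smult poly_sc poly_mult poly_shift e mu_pow[OF assms(1,2)] si)
    apply (simp add: field_simps l)
    done
qed

lemma Gsnd:
  fixes q lam a b mu s :: complex and k :: int
  assumes "mu ^ 2 = lam" "mu \<noteq> 0" "s * s = 2"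
  shows "smult mu (sc (smult (lam powi k * d0) (shift f ((of_int k + 1/2)*q))))
   = smult (1/s) (smult (mu powi (2*k+1) * d0) (shift (smult s (sc f)) (of_int (2*k+1)*q)))"
  unfolding pe
proof
  fix x
  have s0: "s \<noteq> 0" using assms by auto
  have e: "(x - of_int (2*k+1)*q)/2 = x/2 - (of_int k + 1/2) * q" by (simp add: field_simps)
  show "poly (smult mu (sc (smult (lam powi k * d0) (shift f ((of_int k + 1/2)*q))))) x
   = poly (smult (1/s) (smult (mu powi (2*k+1) * d0) (shift (smult s (sc f)) (of_int (2*k+1)*q)))) x"
    apply (simp only: poly_smult poly_sc poly_mult poly_shift e mu_pow[OF assms(1,2)])
    using s0 assms(3) apply (simp add: field_simps)
    done
qed

theorem proposition4p3:
  fixes q lam a b mu :: complex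
  assumes "q \<noteq> 0" and "lam \<noteq> 0" and "mu ^ 2 = lam"
  shows "\<exists>h0 h1. L_module_iso q lam a b mu (2 * b) h0 h1"
proof -
  have mu0: "mu \<noteq> 0" using assms by auto
  have s2: "complex_of_real (sqrt 2) \<noteq> 0" by simp
  have s2sq: "complex_of_real (sqrt 2) * complex_of_real (sqrt 2) = 2"
    by (simp flip: of_real_mult)
  let ?h0 = "\<lambda>f. smult (complex_of_real (sqrt 2)) (sc f)"
  let ?h1 = "\<lambda>f. smult mu (sc f)"
  have L: "map_prod ?h0 ?h1 (OmL_L q lam a b m i v) = tauR_L q mu a (2*b) m i (map_prod ?h0 ?h1 v)"
    for m i v
    unfolding OmL_L_def tauR_L_def OmR_L_def psmult_def Let_def map_prod_simp
    by (simp only: prod.sel fst_map_prod snd_map_prod Lfst[OF assms(3) mu0] Lsnd[OF assms(3) mu0])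
  have G: "map_prod ?h0 ?h1 (OmL_G q lam a b k i v) = tauR_G q mu a (2*b) k i (map_prod ?h0 ?h1 v)"
    for k i v
    unfolding OmL_G_def tauR_G_def OmR_G_def psmult_def Let_def map_prod_simp
    by (simp only: prod.sel fst_map_prod snd_map_prod Gfst[OF assms(3) mu0 s2sq] Gsnd[OF assms(3) mu0 s2sq])
  have "L_module_iso q lam a b mu (2 * b) ?h0 ?h1"
    unfolding L_module_iso_def
    using L G lin_bij_sc[OF s2] lin_bij_sc[OF mu0] by (intro conjI allI)
  then show ?thesis by (rule exI[of _ ?h0, OF exI[of _ ?h1]])
qed
end
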